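(* Let $\varepsilon>0$, $0\le\tau\le\varepsilon$, $\lambda:=\tau/\varepsilon$, and define on $\mathcal V_{[0,1]}$ \[ H(u):= \lambda\langle u,\mathbf{1}-u\rangle_{\mathcal V} +\left\langle u,\left(I-e^{-\tau\Delta}\right)u\right\rangle_{\mathcal V}. \] Then $H(u)\ge0$ for all $u\in\mathcal V_{[0,1]}$. Moreover, if $u_0\in\mathcal V_{[0,1]}$ and $(u_n)_{n\ge0}$, together with some $\beta_{n+1}\in\mathcal B(u_{n+1})$, satisfies for each $n$ \[ u_{n+1} -e^{-\tau\Delta}u_n-\lambda u_{n+1}+\lambda\overline{u_{n+1}}\mathbf{1} =\lambda\beta_{n+1} -\lambda\overline{\beta_{n+1}}\mathbf{1}, \] then $H(u_{n+1})\le H(u_n)$ with equality if and only if $u_{n+1}=u_n$, and \[ H(u_n)-H(u_{n+1}) \geq (1-\lambda)\|u_{n+1}-u_n\|^2_{\mathcal V}. \]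
   Context: $G=(V,E)$ is a finite, simple, connected, undirected graph with weights $\omega_{ij}=\omega_{ji}>0$ for $ij\in E$, $\omega_{ij}=0$ otherwise; $d_i=\sum_j\omega_{ij}$, $r\in[0,1]$ fixed. $\mathcal V$ = functions $V\to\mathbb R$ with $\langle u,v\rangle_{\mathcal V}=\sum_i u_iv_id_i^r$ and norm $\|\cdot\|_{\mathcal V}$; $\mathcal V_{[0,1]}$ = functions $V\to[0,1]$. $(\Delta u)_i=d_i^{-r}\sum_j\omega_{ij}(u_i-u_j)$, $e^{-\tau\Delta}$ its matrix exponential. $\mathbf 1$ all-ones; $\mathcal M(u)=\langle u,\mathbf 1\rangle_{\mathcal V}$; $\bar v=\mathcal M(v)/\mathcal M(\mathbf 1)$. For $u\in\mathcal V_{[0,1]}$, $\mathcal B(u)$ = set of $\beta\in\mathcal V$ with $\beta_i\ge0$ if $u_i=0$, $\beta_i=0$ if $0<u_i<1$, $\beta_i\le0$ if $u_i=1$; $\mathcal B(u)=\emptyset$ otherwise. *)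

theory Defs
  imports "HOL-Analysis.Analysis"
begin

text \<open>Vertex set = the finite type 'v. Weights w :: 'v => 'v => real.
  Real power x^r with the convention 0^0 = 1.\<close>

definition rpow :: "real \<Rightarrow> real \<Rightarrow> real" where
  "rpow x a = (if a = 0 then 1 else x powr a)"

definition weighted_graph :: "('v::finite \<Rightarrow> 'v \<Rightarrow> real) \<Rightarrow> bool" where
  "weighted_graph w \<longleftrightarrow>
     (\<forall>i j. w i j = w j i) \<and> (\<forall>i j. w i j \<ge> 0) \<and> (\<forall>i. w i i = 0) \<and>
     (\<forall>i j. (i, j) \<in> {(a, b). w a b > 0}\<^sup>*)"

definition deg :: "('v::finite \<Rightarrow> 'v \<Rightarrow> real) \<Rightarrow> 'v \<Rightarrow> real" where
  "deg w i = (\<Sum>j\<in>UNIV. w i j)"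

definition ipV :: "('v::finite \<Rightarrow> 'v \<Rightarrow> real) \<Rightarrow> real \<Rightarrow> ('v \<Rightarrow> real) \<Rightarrow> ('v \<Rightarrow> real) \<Rightarrow> real" where
  "ipV w r u v = (\<Sum>i\<in>UNIV. u i * v i * rpow (deg w i) r)"

definition normV :: "('v::finite \<Rightarrow> 'v \<Rightarrow> real) \<Rightarrow> real \<Rightarrow> ('v \<Rightarrow> real) \<Rightarrow> real" where
  "normV w r u = sqrt (ipV w r u u)"

definition V01 :: "('v \<Rightarrow> real) set" where
  "V01 = {u. \<forall>i. 0 \<le> u i \<and> u i \<le> 1}"

definition lap :: "('v::finite \<Rightarrow> 'v \<Rightarrow> real) \<Rightarrow> real \<Rightarrow> ('v \<Rightarrow> real) \<Rightarrow> 'v \<Rightarrow> real" where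
  "lap w r u i = rpow (deg w i) (- r) * (\<Sum>j\<in>UNIV. w i j * (u i - u j))"

definition heat :: "('v::finite \<Rightarrow> 'v \<Rightarrow> real) \<Rightarrow> real \<Rightarrow> real \<Rightarrow> ('v \<Rightarrow> real) \<Rightarrow> 'v \<Rightarrow> real" where
  "heat w r t u i = (\<Sum>k. ((- t) ^ k / fact k) * ((lap w r ^^ k) u) i)"

definition mass :: "('v::finite \<Rightarrow> 'v \<Rightarrow> real) \<Rightarrow> real \<Rightarrow> ('v \<Rightarrow> real) \<Rightarrow> real" where
  "mass w r u = ipV w r u (\<lambda>_. 1)"

definition avg :: "('v::finite \<Rightarrow> 'v \<Rightarrow> real) \<Rightarrow> real \<Rightarrow> ('v \<Rightarrow> real) \<Rightarrow> real" where
  "avg w r v = mass w r v / mass w r (\<lambda>_. 1)"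

definition Bset :: "('v \<Rightarrow> real) \<Rightarrow> ('v \<Rightarrow> real) set" where
  "Bset u = (if u \<in> V01 then
     {b. \<forall>i. (u i = 0 \<longrightarrow> b i \<ge> 0) \<and> (0 < u i \<and> u i < 1 \<longrightarrow> b i = 0) \<and> (u i = 1 \<longrightarrow> b i \<le> 0)}
   else {})"

definition Hfun :: "('v::finite \<Rightarrow> 'v \<Rightarrow> real) \<Rightarrow> real \<Rightarrow> real \<Rightarrow> real \<Rightarrow> ('v \<Rightarrow> real) \<Rightarrow> real" where
  "Hfun w r eps t u = (t / eps) * ipV w r u (\<lambda>i. 1 - u i)
     + ipV w r u (\<lambda>i. u i - heat w r t u i)"

end

theory Submission imports Defs begin

locale hctx =
  fixes M :: "'v::finite \<Rightarrow> 'v \<Rightarrow> real" and p :: "'v \<Rightarrow> real"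
  assumes ppos: "\<And>i. p i > 0"
    and selfadj: "\<And>u v. (\<Sum>i\<in>UNIV. (\<Sum>j\<in>UNIV. M i j * u j) * v i * p i)
                      = (\<Sum>i\<in>UNIV. u i * (\<Sum>j\<in>UNIV. M i j * v j) * p i)"
    and psd: "\<And>u. (\<Sum>i\<in>UNIV. (\<Sum>j\<in>UNIV. M i j * u j) * u i * p i) \<ge> 0"
    and rows: "\<And>i. (\<Sum>j\<in>UNIV. M i j) = 0"
begin

definition Lop :: "('v \<Rightarrow> real) \<Rightarrow> 'v \<Rightarrow> real" where
  "Lop u = (\<lambda>i. \<Sum>j\<in>UNIV. M i j * u j)"

definition ip :: "('v \<Rightarrow> real) \<Rightarrow> ('v \<Rightarrow> real) \<Rightarrow> real" where
  "ip u v = (\<Sum>i\<in>UNIV. u i * v i * p i)"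

definition ee :: "'v \<Rightarrow> 'v \<Rightarrow> real" where
  "ee j = (\<lambda>l. if l = j then 1 else 0)"

definition cc :: "real \<Rightarrow> nat \<Rightarrow> real" where
  "cc t k = (- t) ^ k / fact k"

definition E :: "real \<Rightarrow> ('v \<Rightarrow> real) \<Rightarrow> 'v \<Rightarrow> real" where
  "E t u i = (\<Sum>k. ((- t) ^ k / fact k) * ((Lop ^^ k) u) i)"

definition KK :: real where "KK = (\<Sum>i\<in>UNIV. \<Sum>j\<in>UNIV. \<bar>M i j\<bar>)"

definition NN :: "('v \<Rightarrow> real) \<Rightarrow> real" where "NN u = (\<Sum>i\<in>UNIV. \<bar>u i\<bar>)"

lemma KK_nonneg: "KK \<ge> 0" unfolding KK_def by (intro sum_nonneg) auto

lemma abs_le_NN: "\<bar>u i\<bar> \<le> NN u"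
  unfolding NN_def by (rule member_le_sum) auto

lemma NN_Lop: "NN (Lop u) \<le> KK * NN u"
proof -
  have "NN (Lop u) \<le> (\<Sum>i\<in>UNIV. \<Sum>j\<in>UNIV. \<bar>M i j\<bar> * \<bar>u j\<bar>)"
    unfolding NN_def Lop_def
    by (intro sum_mono order.trans[OF sum_abs]) (simp add: abs_mult)
  also have "\<dots> \<le> (\<Sum>i\<in>UNIV. \<Sum>j\<in>UNIV. \<bar>M i j\<bar> * NN u)"
    by (intro sum_mono mult_left_mono abs_le_NN) auto
  also have "\<dots> = KK * NN u" unfolding KK_def by (simp add: sum_distrib_right)
  finally show ?thesis .
qed

lemma NN_pow: "NN ((Lop ^^ k) u) \<le> KK ^ k * NN u"
proof (induction k)
  case 0 then show ?case by simp
next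
  case (Suc k)
  have "NN ((Lop ^^ Suc k) u) \<le> KK * NN ((Lop ^^ k) u)" using NN_Lop by simp
  also have "\<dots> \<le> KK * (KK ^ k * NN u)" using Suc KK_nonneg by (intro mult_left_mono) auto
  finally show ?case by simp
qed

lemma pow_rep: "(Lop ^^ k) u i = (\<Sum>j\<in>UNIV. u j * (Lop ^^ k) (ee j) i)"
proof (induction k arbitrary: i)
  case 0
  have "(\<Sum>j\<in>UNIV. u j * ee j i) = (\<Sum>j\<in>UNIV. if i = j then u j else 0)"
    by (intro sum.cong) (auto simp: ee_def)
  then show ?case by simp
next
  case (Suc k)
  have "(Lop ^^ Suc k) u i = (\<Sum>l\<in>UNIV. M i l * (Lop ^^ k) u l)" by (simp add: Lop_def)
  also have "\<dots> = (\<Sum>l\<in>UNIV. \<Sum>j\<in>UNIV. M i l * (u j * (Lop ^^ k) (ee j) l))"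
    by (simp add: Suc sum_distrib_left)
  also have "\<dots> = (\<Sum>j\<in>UNIV. u j * (\<Sum>l\<in>UNIV. M i l * (Lop ^^ k) (ee j) l))"
    by (subst sum.swap) (simp add: sum_distrib_left mult_ac)
  also have "\<dots> = (\<Sum>j\<in>UNIV. u j * (Lop ^^ Suc k) (ee j) i)" by (simp add: Lop_def)
  finally show ?case .
qed

lemma summable_abs: "summable (\<lambda>k. \<bar>cc t k * (Lop ^^ k) u i\<bar>)"
proof (rule summable_comparison_test')
  show "summable (\<lambda>k. NN u * (inverse (fact k) * (\<bar>t\<bar> * KK) ^ k))"
    by (intro summable_mult summable_exp)
  fix k
  have "\<bar>(Lop ^^ k) u i\<bar> \<le> KK ^ k * NN u" using abs_le_NN NN_pow order.trans by blast
  then have "\<bar>t\<bar>^k / fact k * \<bar>(Lop ^^ k) u i\<bar> \<le> \<bar>t\<bar>^k / fact k * (KK ^ k * NN u)"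
    by (intro mult_left_mono) auto
  moreover have "norm \<bar>cc t k * (Lop ^^ k) u i\<bar> = \<bar>t\<bar>^k / fact k * \<bar>(Lop ^^ k) u i\<bar>"
    by (simp add: cc_def abs_mult power_abs)
  moreover have "NN u * (inverse (fact k) * (\<bar>t\<bar> * KK) ^ k) = \<bar>t\<bar>^k / fact k * (KK ^ k * NN u)"
    by (simp add: power_mult_distrib divide_inverse mult_ac)
  ultimately show "norm \<bar>cc t k * (Lop ^^ k) u i\<bar> \<le> NN u * (inverse (fact k) * (\<bar>t\<bar> * KK) ^ k)"
    by simp
qed

lemma E_sums: "(\<lambda>k. cc t k * (Lop ^^ k) u i) sums E t u i"
  unfolding E_def cc_def[symmetric]
  by (rule summable_sums[OF summable_rabs_cancel[OF summable_abs]])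


lemma E_unique: "E t u i = (\<Sum>k. cc t k * (Lop ^^ k) u i)"
  by (rule sums_unique[OF E_sums])

lemma E_rep: "E t u i = (\<Sum>j\<in>UNIV. u j * E t (ee j) i)"
proof -
  have "(\<lambda>k. \<Sum>j\<in>UNIV. u j * (cc t k * (Lop ^^ k) (ee j) i)) sums (\<Sum>j\<in>UNIV. u j * E t (ee j) i)"
    by (intro sums_sum sums_mult E_sums)
  moreover have "(\<lambda>k. \<Sum>j\<in>UNIV. u j * (cc t k * (Lop ^^ k) (ee j) i)) = (\<lambda>k. cc t k * (Lop ^^ k) u i)"
    by (subst pow_rep) (simp add: sum_distrib_left mult_ac)
  ultimately show ?thesis using sums_unique2[OF E_sums] by simp
qed

lemma cc_binom: "(\<Sum>k\<le>n. cc s k * cc r (n - k)) = cc (s + r) n"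
proof -
  have "cc (s + r) n = ((- s) + (- r)) ^ n / fact n" by (simp add: cc_def)
  also have "\<dots> = (\<Sum>k\<le>n. of_nat (n choose k) * (- s) ^ k * (- r) ^ (n - k)) / fact n"
    by (subst binomial_ring) simp
  also have "\<dots> = (\<Sum>k\<le>n. of_nat (n choose k) / fact n * (- s) ^ k * (- r) ^ (n - k))"
    by (simp add: sum_divide_distrib)
  also have "\<dots> = (\<Sum>k\<le>n. cc s k * cc r (n - k))"
  proof (intro sum.cong refl)
    fix k assume "k \<in> {..n}"
    then have kn: "k \<le> n" by simp
    have "of_nat (n choose k) / fact n = (1::real) / (fact k * fact (n - k))"
      using binomial_fact[OF kn, where 'a=real] by simp
    then show "of_nat (n choose k) / fact n * (- s) ^ k * (- r) ^ (n - k) = cc s k * cc r (n - k)"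
      by (simp add: cc_def)
  qed
  finally show ?thesis by simp
qed

lemma G_semi: "(\<Sum>l\<in>UNIV. E s (ee l) i * E r (ee j) l) = E (s + r) (ee j) i"
proof -
  have "(\<lambda>n. \<Sum>l\<in>UNIV. \<Sum>k\<le>n. (cc s k * (Lop ^^ k) (ee l) i) * (cc r (n - k) * (Lop ^^ (n - k)) (ee j) l))
        sums (\<Sum>l\<in>UNIV. E s (ee l) i * E r (ee j) l)"
  proof (intro sums_sum)
    fix l
    have "(\<lambda>n. \<Sum>k\<le>n. (cc s k * (Lop ^^ k) (ee l) i) * (cc r (n - k) * (Lop ^^ (n - k)) (ee j) l))
        sums ((\<Sum>k. cc s k * (Lop ^^ k) (ee l) i) * (\<Sum>k. cc r k * (Lop ^^ k) (ee j) l))"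
      by (rule Cauchy_product_sums) (simp_all add: summable_abs)
    then show "(\<lambda>n. \<Sum>k\<le>n. (cc s k * (Lop ^^ k) (ee l) i) * (cc r (n - k) * (Lop ^^ (n - k)) (ee j) l))
        sums (E s (ee l) i * E r (ee j) l)"
      by (simp only: E_unique)
  qed
  moreover have "(\<lambda>n. \<Sum>l\<in>UNIV. \<Sum>k\<le>n. (cc s k * (Lop ^^ k) (ee l) i) * (cc r (n - k) * (Lop ^^ (n - k)) (ee j) l))
     = (\<lambda>n. cc (s + r) n * (Lop ^^ n) (ee j) i)"
  proof
    fix n
    have "(\<Sum>l\<in>UNIV. \<Sum>k\<le>n. (cc s k * (Lop ^^ k) (ee l) i) * (cc r (n - k) * (Lop ^^ (n - k)) (ee j) l))
       = (\<Sum>k\<le>n. \<Sum>l\<in>UNIV. (cc s k * (Lop ^^ k) (ee l) i) * (cc r (n - k) * (Lop ^^ (n - k)) (ee j) l))"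
      by (rule sum.swap)
    also have "\<dots> = (\<Sum>k\<le>n. cc s k * cc r (n - k) * (\<Sum>l\<in>UNIV. (Lop ^^ (n - k)) (ee j) l * (Lop ^^ k) (ee l) i))"
      by (simp add: sum_distrib_left mult_ac)
    also have "\<dots> = (\<Sum>k\<le>n. cc s k * cc r (n - k) * (Lop ^^ k) ((Lop ^^ (n - k)) (ee j)) i)"
      by (simp only: pow_rep[of _ "(Lop ^^ (n - _)) (ee j)" i])
    also have "\<dots> = (\<Sum>k\<le>n. cc s k * cc r (n - k) * (Lop ^^ n) (ee j) i)"
    proof (intro sum.cong refl)
      fix k assume "k \<in> {..n}"
      then have "n = k + (n - k)" by simp
      then have "(Lop ^^ n) = (Lop ^^ k) \<circ> (Lop ^^ (n - k))" by (metis funpow_add)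
      then show "cc s k * cc r (n - k) * (Lop ^^ k) ((Lop ^^ (n - k)) (ee j)) i
          = cc s k * cc r (n - k) * (Lop ^^ n) (ee j) i" by simp
    qed
    also have "\<dots> = cc (s + r) n * (Lop ^^ n) (ee j) i"
      by (simp only: sum_distrib_right[symmetric] cc_binom)
    finally show "(\<Sum>l\<in>UNIV. \<Sum>k\<le>n. (cc s k * (Lop ^^ k) (ee l) i) * (cc r (n - k) * (Lop ^^ (n - k)) (ee j) l))
       = cc (s + r) n * (Lop ^^ n) (ee j) i" .
  qed
  ultimately show ?thesis using sums_unique2[OF E_sums] by simp
qed

lemma E_semi: "E s (E r u) i = E (s + r) u i"
proof -
  have "E s (E r u) i = (\<Sum>l\<in>UNIV. (\<Sum>j\<in>UNIV. u j * E r (ee j) l) * E s (ee l) i)"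
    by (simp only: E_rep[of s "E r u" i] E_rep[of r u])
  also have "\<dots> = (\<Sum>l\<in>UNIV. \<Sum>j\<in>UNIV. u j * (E s (ee l) i * E r (ee j) l))"
    by (simp add: sum_distrib_left sum_distrib_right mult_ac)
  also have "\<dots> = (\<Sum>j\<in>UNIV. \<Sum>l\<in>UNIV. u j * (E s (ee l) i * E r (ee j) l))"
    by (rule sum.swap)
  also have "\<dots> = (\<Sum>j\<in>UNIV. u j * E (s + r) (ee j) i)"
    by (simp add: sum_distrib_left[symmetric] G_semi)
  also have "\<dots> = E (s + r) u i" by (simp only: E_rep[of "s + r" u i])
  finally show ?thesis .
qed

lemma E_zero: "E 0 u i = u i"
proof -
  have "(\<lambda>k. cc 0 k * (Lop ^^ k) u i) = (\<lambda>k. if k = 0 then (Lop ^^ k) u i else 0)"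
    by (auto simp: cc_def)
  then have "(\<lambda>k. if k = 0 then (Lop ^^ k) u i else 0) sums E 0 u i" using E_sums[of 0 u i] by simp
  moreover have "(\<lambda>k. if k = 0 then (Lop ^^ k) u i else 0) sums ((Lop ^^ 0) u i)" by (rule sums_single)
  ultimately show ?thesis using sums_unique2 by fastforce
qed

lemma E_lin: "E t (\<lambda>i. a * x i + b * y i) i = a * E t x i + b * E t y i"
  unfolding E_rep[of t "\<lambda>i. a * x i + b * y i" i] E_rep[of t x i] E_rep[of t y i]
  by (simp add: algebra_simps sum.distrib sum_distrib_left)


lemma ip_comm: "ip u v = ip v u" unfolding ip_def by (simp add: mult_ac)

lemma ip_Lop: "ip (Lop u) v = ip u (Lop v)"
  unfolding ip_def Lop_def using selfadj by simp

lemma ip_pow: "ip ((Lop ^^ k) u) v = ip u ((Lop ^^ k) v)"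
proof (induction k arbitrary: v)
  case 0 then show ?case by simp
next
  case (Suc k)
  have "ip ((Lop ^^ Suc k) u) v = ip (Lop ((Lop ^^ k) u)) v" by simp
  also have "\<dots> = ip ((Lop ^^ k) u) (Lop v)" by (rule ip_Lop)
  also have "\<dots> = ip u ((Lop ^^ k) (Lop v))" by (rule Suc)
  also have "\<dots> = ip u ((Lop ^^ Suc k) v)" by (simp only: funpow_Suc_right comp_apply)
  finally show ?case .
qed

lemma ip_E_sums: "(\<lambda>k. cc t k * ip ((Lop ^^ k) u) v) sums ip (E t u) v"
proof -
  have "(\<lambda>k. \<Sum>i\<in>UNIV. cc t k * (Lop ^^ k) u i * (v i * p i)) sums (\<Sum>i\<in>UNIV. E t u i * (v i * p i))"
    by (intro sums_sum sums_mult2 E_sums)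
  then show ?thesis unfolding ip_def by (simp add: sum_distrib_left mult_ac)
qed

lemma ip_E_sym: "ip (E t u) v = ip u (E t v)"
proof -
  have "(\<lambda>k. cc t k * ip ((Lop ^^ k) v) u) sums ip (E t v) u" by (rule ip_E_sums)
  moreover have "(\<lambda>k. cc t k * ip ((Lop ^^ k) v) u) = (\<lambda>k. cc t k * ip ((Lop ^^ k) u) v)"
    by (simp add: ip_pow ip_comm[of v])
  ultimately have "(\<lambda>k. cc t k * ip ((Lop ^^ k) u) v) sums ip (E t v) u" by simp
  then have "ip (E t u) v = ip (E t v) u" using sums_unique2[OF ip_E_sums] by simp
  then show ?thesis by (simp add: ip_comm[of u])
qed

lemma Lop_one: "Lop (\<lambda>_. 1) = (\<lambda>_. 0)"
  unfolding Lop_def using rows by simp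

lemma ip_E_one: "ip (E t u) (\<lambda>_. 1) = ip u (\<lambda>_. 1)"
proof -
  have "(\<lambda>k. cc t k * ip ((Lop ^^ k) u) (\<lambda>_. 1)) = (\<lambda>k. if k = 0 then ip u (\<lambda>_. 1) else 0)"
  proof
    fix k show "cc t k * ip ((Lop ^^ k) u) (\<lambda>_. 1) = (if k = 0 then ip u (\<lambda>_. 1) else 0)"
    proof (cases k)
      case 0 then show ?thesis by (simp add: cc_def)
    next
      case (Suc m)
      have "ip ((Lop ^^ k) u) (\<lambda>_. 1) = ip ((Lop ^^ m) u) (Lop (\<lambda>_. 1))"
        using Suc ip_Lop by simp
      also have "\<dots> = 0" by (simp add: Lop_one ip_def)
      finally show ?thesis using Suc by simp
    qed
  qed
  then have "(\<lambda>k. if k = 0 then ip u (\<lambda>_. 1) else 0) sums ip (E t u) (\<lambda>_. 1)"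
    using ip_E_sums[of t u "\<lambda>_. 1"] by simp
  moreover have "(\<lambda>k. if k = 0 then ip u (\<lambda>_. 1) else 0) sums ip u (\<lambda>_. 1)"
    using sums_single[of 0 "\<lambda>_. ip u (\<lambda>_. 1)"] by simp
  ultimately show ?thesis by (rule sums_unique2)
qed

lemma E_Lop: "E t (Lop u) i = Lop (E t u) i"
proof -
  have "(\<lambda>k. \<Sum>j\<in>UNIV. M i j * (cc t k * (Lop ^^ k) u j)) sums (\<Sum>j\<in>UNIV. M i j * E t u j)"
    by (intro sums_sum sums_mult E_sums)
  moreover have "(\<lambda>k. \<Sum>j\<in>UNIV. M i j * (cc t k * (Lop ^^ k) u j)) = (\<lambda>k. cc t k * (Lop ^^ k) (Lop u) i)"
  proof
    fix k
    have "(\<Sum>j\<in>UNIV. M i j * (cc t k * (Lop ^^ k) u j)) = cc t k * Lop ((Lop ^^ k) u) i"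
      by (simp add: Lop_def sum_distrib_left mult_ac)
    also have "\<dots> = cc t k * (Lop ^^ k) (Lop u) i" by (simp only: funpow_swap1)
    finally show "(\<Sum>j\<in>UNIV. M i j * (cc t k * (Lop ^^ k) u j)) = cc t k * (Lop ^^ k) (Lop u) i" .
  qed
  ultimately have "(\<lambda>k. cc t k * (Lop ^^ k) (Lop u) i) sums Lop (E t u) i"
    by (simp add: Lop_def)
  then show ?thesis using sums_unique2[OF E_sums] by simp
qed

lemma ip_self_nonneg: "ip y y \<ge> 0"
  unfolding ip_def using ppos by (intro sum_nonneg) (simp add: less_imp_le)

lemma ip_self_pos: assumes "y \<noteq> (\<lambda>_. 0)" shows "ip y y > 0"
proof -
  obtain i where i: "y i \<noteq> 0" using assms by auto
  have a: "\<And>j. 0 \<le> y j * y j * p j"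
    by (rule mult_nonneg_nonneg[OF zero_le_square less_imp_le[OF ppos]])
  have "0 < y i * y i" using i by (simp add: zero_less_mult_iff linorder_neq_iff disj_commute)
  then have b: "0 < y i * y i * p i" using ppos[of i] by (rule mult_pos_pos)
  show ?thesis unfolding ip_def
    by (rule sum_pos2[where i=i]) (use a b in auto)
qed

lemma E_half: "ip x (E t x) = ip (E (t / 2) x) (E (t / 2) x)"
proof -
  have "E t x = E (t / 2) (E (t / 2) x)" by (rule ext) (simp add: E_semi)
  then show ?thesis by (simp add: ip_E_sym)
qed

lemma E_of_zero: "E t (\<lambda>_. 0) i = 0"
  by (simp add: E_rep[of t "\<lambda>_. 0" i])

lemma E_pos: assumes "x \<noteq> (\<lambda>_. 0)" shows "ip x (E t x) > 0"
proof -
  have "E (t / 2) x \<noteq> (\<lambda>_. 0)"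
  proof
    assume h: "E (t / 2) x = (\<lambda>_. 0)"
    have "x = (\<lambda>i. E (- (t / 2)) (E (t / 2) x) i)" by (simp add: E_semi E_zero)
    also have "\<dots> = (\<lambda>_. 0)" by (simp add: h E_of_zero)
    finally show False using assms by simp
  qed
  then show ?thesis using E_half ip_self_pos by simp
qed

lemma E_nonneg: "ip x (E t x) \<ge> 0"
  using E_half ip_self_nonneg by simp


lemma E_contr: assumes "t \<ge> 0" shows "ip x (E t x) \<le> ip x x"
proof -
  define a where "a k = (-1) ^ k / fact k * ip ((Lop ^^ k) x) x" for k
  have ser: "(\<lambda>k. a k * s ^ k) sums ip (E s x) x" for s
  proof -
    have "(\<lambda>k. a k * s ^ k) = (\<lambda>k. cc s k * ip ((Lop ^^ k) x) x)"
      by (rule ext) (simp add: a_def cc_def power_minus[of s])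
    then show ?thesis using ip_E_sums[of s x x] by simp
  qed
  define F where "F s = (\<Sum>k. a k * s ^ k)" for s
  have Feq: "F s = ip (E s x) x" for s
    unfolding F_def by (rule sums_unique[OF ser, symmetric])
  have summ: "summable (\<lambda>k. a k * y ^ k)" for y by (rule sums_summable[OF ser])
  have der: "(F has_field_derivative (\<Sum>n. diffs a n * s ^ n)) (at s)" for s
    unfolding F_def by (rule termdiffs_strong_converges_everywhere) (rule summ)
  have dval: "(\<Sum>n. diffs a n * s ^ n) = - ip (E s (Lop x)) x" for s
  proof -
    have "(\<lambda>n. diffs a n * s ^ n) = (\<lambda>n. - (cc s n * ip ((Lop ^^ n) (Lop x)) x))"
    proof
      fix n
      have "ip ((Lop ^^ Suc n) x) x = ip ((Lop ^^ n) (Lop x)) x" by (simp only: funpow_Suc_right comp_apply)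
      then show "diffs a n * s ^ n = - (cc s n * ip ((Lop ^^ n) (Lop x)) x)"
        by (simp add: diffs_def a_def cc_def power_minus[of s] divide_simps)
    qed
    moreover have "(\<lambda>n. - (cc s n * ip ((Lop ^^ n) (Lop x)) x)) sums (- ip (E s (Lop x)) x)"
      by (intro sums_minus ip_E_sums)
    ultimately have "(\<lambda>n. diffs a n * s ^ n) sums (- ip (E s (Lop x)) x)" by simp
    then show ?thesis by (rule sums_unique[symmetric])
  qed
  have dnonpos: "- ip (E s (Lop x)) x \<le> 0" for s
  proof -
    let ?y = "E (s / 2) x"
    have e1: "E s (Lop x) = E (s / 2) (E (s / 2) (Lop x))" by (rule ext) (simp add: E_semi)
    have e2: "E (s / 2) (Lop x) = Lop ?y" by (rule ext) (simp add: E_Lop)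
    have "ip (E s (Lop x)) x = ip (E (s / 2) (Lop ?y)) x" by (simp only: e1 e2)
    also have "\<dots> = ip (Lop ?y) ?y" by (simp add: ip_E_sym)
    finally show ?thesis using psd[of ?y] unfolding ip_def Lop_def by simp
  qed
  have "F t \<le> F 0"
  proof (rule DERIV_nonpos_imp_nonincreasing[OF assms])
    fix s :: real
    show "\<exists>y. (F has_field_derivative y) (at s) \<and> y \<le> 0"
      by (rule exI[of _ "- ip (E s (Lop x)) x"]) (use der[of s] dval[of s] dnonpos[of s] in simp)
  qed
  moreover have "E 0 x = x" by (rule ext) (rule E_zero)
  ultimately have "ip (E t x) x \<le> ip x x" using Feq[of t] Feq[of 0] by simp
  then show ?thesis by (simp only: ip_comm[of x "E t x"])
qed

end

lemma rpow_pos: "x > 0 \<Longrightarrow> rpow x a > 0"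
  unfolding rpow_def by simp

lemma rpow_inv: "x > 0 \<Longrightarrow> rpow x a * rpow x (- a) = 1"
  unfolding rpow_def by (simp add: powr_minus)

lemma M_row:
  "(\<Sum>j\<in>UNIV. (rpow (deg w i) (- r) * ((if j = i then deg w i else 0) - w i j)) * u j)
    = rpow (deg w i) (- r) * (\<Sum>j\<in>UNIV. w i j * (u i - u j))"
proof -
  have "(\<Sum>j\<in>UNIV. (rpow (deg w i) (- r) * ((if j = i then deg w i else 0) - w i j)) * u j)
     = rpow (deg w i) (- r) * ((\<Sum>j\<in>UNIV. if j = i then deg w i * u j else 0) - (\<Sum>j\<in>UNIV. w i j * u j))"
  proof -
    have "(\<Sum>j\<in>UNIV. (rpow (deg w i) (- r) * ((if j = i then deg w i else 0) - w i j)) * u j)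
       = (\<Sum>j\<in>UNIV. rpow (deg w i) (- r) * ((if j = i then deg w i * u j else 0) - w i j * u j))"
      by (rule sum.cong[OF refl]) (auto simp: algebra_simps)
    also have "\<dots> = rpow (deg w i) (- r) * (\<Sum>j\<in>UNIV. ((if j = i then deg w i * u j else 0) - w i j * u j))"
      by (rule sum_distrib_left[symmetric])
    also have "\<dots> = rpow (deg w i) (- r) * ((\<Sum>j\<in>UNIV. if j = i then deg w i * u j else 0) - (\<Sum>j\<in>UNIV. w i j * u j))"
      by (simp only: sum_subtractf)
    finally show ?thesis .
  qed
  also have "(\<Sum>j\<in>UNIV. if j = i then deg w i * u j else 0) = deg w i * u i" by simp
  also have "deg w i * u i - (\<Sum>j\<in>UNIV. w i j * u j) = (\<Sum>j\<in>UNIV. w i j * (u i - u j))"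
    by (simp add: deg_def sum_distrib_left sum_distrib_right sum_subtractf right_diff_distrib mult_ac)
  finally show ?thesis .
qed

lemma W_swap:
  assumes sym: "\<forall>i j. w i j = w j i"
  shows "(\<Sum>i\<in>UNIV. \<Sum>j\<in>UNIV. w i j * f i j) = (\<Sum>i\<in>UNIV. \<Sum>j\<in>UNIV. w i j * f j i)"
  by (subst sum.swap) (simp add: sym)

lemma hctx_graph:
  fixes w :: "'v::finite \<Rightarrow> 'v \<Rightarrow> real"
  assumes sym: "\<forall>i j. w i j = w j i" and wnn: "\<forall>i j. w i j \<ge> 0" and degpos: "\<forall>i. deg w i > 0"
  shows "hctx (\<lambda>i j. rpow (deg w i) (- r) * ((if j = i then deg w i else 0) - w i j)) (\<lambda>i. rpow (deg w i) r)"
proof -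
  have key: "(\<Sum>j\<in>UNIV. (rpow (deg w i) (- r) * ((if j = i then deg w i else 0) - w i j)) * u j) * rpow (deg w i) r
      = (\<Sum>j\<in>UNIV. w i j * (u i - u j))" for i u
  proof -
    have "rpow (deg w i) r * rpow (deg w i) (- r) = 1" using rpow_inv degpos by blast
    then show ?thesis by (simp only: M_row) (simp add: mult_ac)
  qed
  have W: "(\<Sum>i\<in>UNIV. (\<Sum>j\<in>UNIV. (rpow (deg w i) (- r) * ((if j = i then deg w i else 0) - w i j)) * u j) * v i * rpow (deg w i) r)
      = (\<Sum>i\<in>UNIV. \<Sum>j\<in>UNIV. w i j * (u i - u j) * v i)" for u v
  proof (intro sum.cong refl)
    fix i assume "i \<in> (UNIV :: 'v set)"
    have "(\<Sum>j\<in>UNIV. (rpow (deg w i) (- r) * ((if j = i then deg w i else 0) - w i j)) * u j) * v i * rpow (deg w i) r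
       = ((\<Sum>j\<in>UNIV. (rpow (deg w i) (- r) * ((if j = i then deg w i else 0) - w i j)) * u j) * rpow (deg w i) r) * v i"
      by (simp only: mult_ac)
    also have "\<dots> = (\<Sum>j\<in>UNIV. w i j * (u i - u j)) * v i" by (simp only: key)
    also have "\<dots> = (\<Sum>j\<in>UNIV. w i j * (u i - u j) * v i)" by (simp add: sum_distrib_right)
    finally show "(\<Sum>j\<in>UNIV. (rpow (deg w i) (- r) * ((if j = i then deg w i else 0) - w i j)) * u j) * v i * rpow (deg w i) r
       = (\<Sum>j\<in>UNIV. w i j * (u i - u j) * v i)" .
  qed
  show ?thesis
  proof
    show "0 < rpow (deg w i) r" for i using degpos rpow_pos by blast
  next
    fix u v :: "'v \<Rightarrow> real"
    have "(\<Sum>i\<in>UNIV. \<Sum>j\<in>UNIV. w i j * (u i - u j) * v i)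
        = (\<Sum>i\<in>UNIV. \<Sum>j\<in>UNIV. w i j * (u i * v i)) - (\<Sum>i\<in>UNIV. \<Sum>j\<in>UNIV. w i j * (u j * v i))"
      by (simp add: sum_subtractf[symmetric] algebra_simps)
    also have "(\<Sum>i\<in>UNIV. \<Sum>j\<in>UNIV. w i j * (u j * v i)) = (\<Sum>i\<in>UNIV. \<Sum>j\<in>UNIV. w i j * (u i * v j))"
      by (rule W_swap[OF sym])
    also have "(\<Sum>i\<in>UNIV. \<Sum>j\<in>UNIV. w i j * (u i * v i)) - (\<Sum>i\<in>UNIV. \<Sum>j\<in>UNIV. w i j * (u i * v j))
        = (\<Sum>i\<in>UNIV. \<Sum>j\<in>UNIV. w i j * (v i - v j) * u i)"
      by (simp add: sum_subtractf[symmetric] algebra_simps)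
    finally have "(\<Sum>i\<in>UNIV. \<Sum>j\<in>UNIV. w i j * (u i - u j) * v i) = (\<Sum>i\<in>UNIV. \<Sum>j\<in>UNIV. w i j * (v i - v j) * u i)" .
    then show "(\<Sum>i\<in>UNIV. (\<Sum>j\<in>UNIV. (rpow (deg w i) (- r) * ((if j = i then deg w i else 0) - w i j)) * u j) * v i * rpow (deg w i) r)
      = (\<Sum>i\<in>UNIV. u i * (\<Sum>j\<in>UNIV. (rpow (deg w i) (- r) * ((if j = i then deg w i else 0) - w i j)) * v j) * rpow (deg w i) r)"
      using W[of u v] W[of v u] by (simp add: mult_ac)
  next
    fix u :: "'v \<Rightarrow> real"
    have "2 * (\<Sum>i\<in>UNIV. \<Sum>j\<in>UNIV. w i j * (u i - u j) * u i)
        = (\<Sum>i\<in>UNIV. \<Sum>j\<in>UNIV. w i j * (u i - u j) * u i) + (\<Sum>i\<in>UNIV. \<Sum>j\<in>UNIV. w i j * ((u j - u i) * u j))"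
      using W_swap[OF sym, of "\<lambda>i j. (u i - u j) * u i"] by (simp add: mult_ac)
    also have "\<dots> = (\<Sum>i\<in>UNIV. \<Sum>j\<in>UNIV. w i j * (u i - u j)^2)"
      by (simp add: sum.distrib[symmetric] power2_eq_square algebra_simps)
    also have "\<dots> \<ge> 0"
      using assms by (intro sum_nonneg mult_nonneg_nonneg) auto
    finally have "(\<Sum>i\<in>UNIV. \<Sum>j\<in>UNIV. w i j * (u i - u j) * u i) \<ge> 0" by simp
    then show "0 \<le> (\<Sum>i\<in>UNIV. (\<Sum>j\<in>UNIV. (rpow (deg w i) (- r) * ((if j = i then deg w i else 0) - w i j)) * u j) * u i * rpow (deg w i) r)"
      using W[of u u] by simp
  next
    fix i
    show "(\<Sum>j\<in>UNIV. rpow (deg w i) (- r) * ((if j = i then deg w i else 0) - w i j)) = 0"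
      using M_row[of w i r "\<lambda>_. 1"] by simp
  qed
qed

theorem theorem33:
  fixes w :: "'v::finite \<Rightarrow> 'v \<Rightarrow> real" and r eps t :: real
    and u beta :: "nat \<Rightarrow> 'v \<Rightarrow> real"
  assumes graph: "weighted_graph w" and degpos: "\<forall>i. deg w i > 0"
    and r: "0 \<le> r" "r \<le> 1"
    and eps: "eps > 0" and t: "0 \<le> t" "t \<le> eps"
  shows "(\<forall>v\<in>V01. Hfun w r eps t v \<ge> 0) \<and>
    ((u 0 \<in> V01 \<and>
      (\<forall>n. beta (Suc n) \<in> Bset (u (Suc n)) \<and>
         (\<forall>i. u (Suc n) i - heat w r t (u n) i - (t / eps) * u (Suc n) i
                + (t / eps) * avg w r (u (Suc n))
              = (t / eps) * beta (Suc n) i - (t / eps) * avg w r (beta (Suc n)))))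
     \<longrightarrow> (\<forall>n. Hfun w r eps t (u (Suc n)) \<le> Hfun w r eps t (u n)
              \<and> (Hfun w r eps t (u (Suc n)) = Hfun w r eps t (u n) \<longleftrightarrow> u (Suc n) = u n)
              \<and> Hfun w r eps t (u n) - Hfun w r eps t (u (Suc n))
                  \<ge> (1 - t / eps) * (normV w r (\<lambda>i. u (Suc n) i - u n i))\<^sup>2))"
proof -
  have sym: "\<forall>i j. w i j = w j i" and wnn: "\<forall>i j. w i j \<ge> 0"
    using graph unfolding weighted_graph_def by auto
  define M where "M = (\<lambda>i j. rpow (deg w i) (- r) * ((if j = i then deg w i else 0) - w i j))"
  define p where "p = (\<lambda>i. rpow (deg w i) r)"
  interpret h: hctx M p unfolding M_def p_def by (rule hctx_graph[OF sym wnn degpos])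
  have lap_eq: "lap w r = h.Lop"
  proof (intro ext)
    fix f :: "'v \<Rightarrow> real" and i
    have "h.Lop f i = (\<Sum>j\<in>UNIV. M i j * f j)" by (simp only: h.Lop_def)
    then show "lap w r f i = h.Lop f i" using M_row[of w i r f] by (simp add: lap_def M_def)
  qed
  have heat_eq: "heat w r s = h.E s" for s
    by (intro ext) (simp only: heat_def h.E_def lap_eq)
  have ip_eq: "ipV w r f g = h.ip f g" for f g
  proof -
    have "h.ip f g = (\<Sum>i\<in>UNIV. f i * g i * p i)" by (simp only: h.ip_def)
    then show ?thesis by (simp add: ipV_def p_def)
  qed
  have ipsub: "h.ip f (\<lambda>i. g i - k i) = h.ip f g - h.ip f k" for f g k
    by (simp add: h.ip_def sum_subtractf[symmetric] algebra_simps)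
  define lam where "lam = t / eps"
  have lam0: "0 \<le> lam" and lam1: "lam \<le> 1" using eps t by (auto simp: lam_def)
  have H: "Hfun w r eps t v = lam * h.ip v (\<lambda>i. 1 - v i) + (h.ip v v - h.ip v (h.E t v))" for v
    by (simp add: Hfun_def heat_eq ip_eq lam_def ipsub)
  have part1: "\<forall>v\<in>V01. Hfun w r eps t v \<ge> 0"
  proof
    fix v :: "'v \<Rightarrow> real" assume v: "v \<in> V01"
    have a: "h.ip v (\<lambda>i. 1 - v i) \<ge> 0" unfolding h.ip_def using v h.ppos
      by (intro sum_nonneg mult_nonneg_nonneg) (auto simp: V01_def less_imp_le)
    have b: "h.ip v (h.E t v) \<le> h.ip v v" by (rule h.E_contr[OF t(1)])
    have c: "lam * h.ip v (\<lambda>i. 1 - v i) \<ge> 0" by (rule mult_nonneg_nonneg[OF lam0 a])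
    show "Hfun w r eps t v \<ge> 0" using b c by (simp add: H)
  qed
  have part2: "(u 0 \<in> V01 \<and>
      (\<forall>n. beta (Suc n) \<in> Bset (u (Suc n)) \<and>
         (\<forall>i. u (Suc n) i - heat w r t (u n) i - (t / eps) * u (Suc n) i
                + (t / eps) * avg w r (u (Suc n))
              = (t / eps) * beta (Suc n) i - (t / eps) * avg w r (beta (Suc n)))))
     \<longrightarrow> (\<forall>n. Hfun w r eps t (u (Suc n)) \<le> Hfun w r eps t (u n)
              \<and> (Hfun w r eps t (u (Suc n)) = Hfun w r eps t (u n) \<longleftrightarrow> u (Suc n) = u n)
              \<and> Hfun w r eps t (u n) - Hfun w r eps t (u (Suc n))
                  \<ge> (1 - t / eps) * (normV w r (\<lambda>i. u (Suc n) i - u n i))\<^sup>2)"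
  proof (intro impI allI)
    fix n
    assume hyp: "u 0 \<in> V01 \<and>
      (\<forall>n. beta (Suc n) \<in> Bset (u (Suc n)) \<and>
         (\<forall>i. u (Suc n) i - heat w r t (u n) i - (t / eps) * u (Suc n) i
                + (t / eps) * avg w r (u (Suc n))
              = (t / eps) * beta (Suc n) i - (t / eps) * avg w r (beta (Suc n))))"
    have V: "u m \<in> V01" for m
      using hyp by (cases m) (auto simp: Bset_def split: if_splits)
    define uu where "uu = u n"
    define vv where "vv = u (Suc n)"
    define bb where "bb = beta (Suc n)"
    define dd where "dd = (\<lambda>i. vv i - uu i)"
    define one where "one = (\<lambda>_::'v. 1::real)"
    define av where "av = avg w r vv"
    define ab where "ab = avg w r bb"
    define a where "a = h.E t uu"
    define d where "d = h.E t dd"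
    have eq: "vv i - a i - lam * vv i + lam * av = lam * bb i - lam * ab" for i
      using hyp unfolding vv_def uu_def bb_def av_def ab_def a_def lam_def heat_eq by blast
    have ai: "a i = vv i - lam * vv i + lam * av - lam * bb i + lam * ab" for i
      using eq[of i] by linarith
    have bset: "bb \<in> Bset vv" using hyp unfolding bb_def vv_def by blast
    have vV: "vv \<in> V01" and uV: "uu \<in> V01" using V unfolding vv_def uu_def by auto
    have m1pos: "h.ip one one > 0" by (rule h.ip_self_pos) (simp add: one_def fun_eq_iff)
    have avg_eq: "avg w r f * h.ip one one = h.ip f one" for f
      using m1pos by (simp add: avg_def mass_def ip_eq one_def)
    have ipone: "h.ip f one = (\<Sum>i\<in>UNIV. f i * p i)" for f by (simp add: h.ip_def one_def)
    have Eone: "h.ip a one = h.ip uu one" unfolding a_def one_def by (rule h.ip_E_one)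
    have "(\<Sum>i\<in>UNIV. (vv i - a i - lam * vv i + lam * av) * p i) = (\<Sum>i\<in>UNIV. (lam * bb i - lam * ab) * p i)"
      using eq by simp
    moreover have "(\<Sum>i\<in>UNIV. (vv i - a i - lam * vv i + lam * av) * p i)
        = h.ip vv one - h.ip a one - lam * h.ip vv one + lam * (av * h.ip one one)"
      unfolding ipone by (simp add: sum.distrib sum_subtractf sum_distrib_left algebra_simps one_def)
    moreover have "(\<Sum>i\<in>UNIV. (lam * bb i - lam * ab) * p i) = lam * h.ip bb one - lam * (ab * h.ip one one)"
      unfolding ipone by (simp add: sum.distrib sum_subtractf sum_distrib_left algebra_simps one_def)
    ultimately have "h.ip vv one - h.ip a one = 0"
      using avg_eq[of vv] avg_eq[of bb] unfolding av_def ab_def by simp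
    then have mass: "(\<Sum>i\<in>UNIV. dd i * p i) = 0"
      using Eone by (simp add: dd_def ipone sum_subtractf left_diff_distrib)
    have Ev: "h.E t vv i = a i + d i" for i
    proof -
      have "vv = (\<lambda>i. 1 * uu i + 1 * dd i)" by (simp add: dd_def)
      then show ?thesis unfolding a_def d_def using h.E_lin[of t 1 uu 1 dd i] by simp
    qed
    have sa: "h.ip uu d = h.ip dd a"
      unfolding a_def d_def by (simp only: h.ip_E_sym[of t uu dd, symmetric] h.ip_comm[of "h.E t uu" dd])
    have K: "Hfun w r eps t uu - Hfun w r eps t vv
        = (1 - lam) * h.ip dd dd + h.ip dd d - 2 * lam * h.ip dd bb"
    proof -
      define LL where "LL i = p i * (lam * (uu i * (1 - uu i)) + (uu i * uu i - uu i * a i)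
          - (lam * (vv i * (1 - vv i)) + (vv i * vv i - vv i * (a i + d i))))" for i
      define RR where "RR i = p i * ((1 - lam) * (dd i * dd i) + dd i * d i - 2 * lam * (dd i * bb i))" for i
      define C where "C = 2 * lam * (av + ab) - lam"
      have pt: "LL i = RR i + C * (dd i * p i) + (uu i * d i * p i - dd i * a i * p i)" for i
        unfolding LL_def RR_def C_def dd_def by (simp add: ai algebra_simps)
      have Evf: "h.E t vv = (\<lambda>i. a i + d i)" by (rule ext) (rule Ev)
      have Hu: "Hfun w r eps t uu = lam * h.ip uu (\<lambda>i. 1 - uu i) + (h.ip uu uu - h.ip uu a)"
        by (simp add: H a_def)
      have Hv: "Hfun w r eps t vv = lam * h.ip vv (\<lambda>i. 1 - vv i) + (h.ip vv vv - h.ip vv (\<lambda>i. a i + d i))"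
        by (simp add: H Evf)
      have s1: "Hfun w r eps t uu - Hfun w r eps t vv = (\<Sum>i\<in>UNIV. LL i)"
        unfolding Hu Hv LL_def h.ip_def
        by (simp add: sum_subtractf sum.distrib sum_distrib_left algebra_simps)
      have s2: "(\<Sum>i\<in>UNIV. RR i) = (1 - lam) * h.ip dd dd + h.ip dd d - 2 * lam * h.ip dd bb"
        unfolding RR_def h.ip_def
        by (simp add: sum_subtractf sum.distrib sum_distrib_left algebra_simps)
      have s3: "(\<Sum>i\<in>UNIV. LL i) = (\<Sum>i\<in>UNIV. RR i) + C * (\<Sum>i\<in>UNIV. dd i * p i)
          + ((\<Sum>i\<in>UNIV. uu i * d i * p i) - (\<Sum>i\<in>UNIV. dd i * a i * p i))"
        by (simp add: pt sum.distrib sum_subtractf sum_distrib_left)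
      have s4: "(\<Sum>i\<in>UNIV. uu i * d i * p i) = (\<Sum>i\<in>UNIV. dd i * a i * p i)"
        using sa by (simp add: h.ip_def)
      show ?thesis using s1 s2 s3 s4 mass by simp
    qed
    have sgn: "h.ip dd bb \<le> 0"
    proof -
      have pw: "dd i * bb i \<le> 0" for i
      proof -
        have b: "(vv i = 0 \<longrightarrow> bb i \<ge> 0) \<and> (0 < vv i \<and> vv i < 1 \<longrightarrow> bb i = 0) \<and> (vv i = 1 \<longrightarrow> bb i \<le> 0)"
          using bset vV by (simp add: Bset_def)
        have "0 \<le> vv i" "vv i \<le> 1" "0 \<le> uu i" "uu i \<le> 1" using vV uV by (auto simp: V01_def)
        then consider "vv i = 0" | "0 < vv i \<and> vv i < 1" | "vv i = 1" by linarith
        then show ?thesis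
        proof cases
          case 1 then show ?thesis using b \<open>0 \<le> uu i\<close> by (simp add: dd_def mult_nonpos_nonneg)
        next
          case 2 then show ?thesis using b by simp
        next
          case 3 then show ?thesis using b \<open>uu i \<le> 1\<close> by (simp add: dd_def mult_nonneg_nonpos)
        qed
      qed
      then show ?thesis unfolding h.ip_def
        by (intro sum_nonpos) (rule mult_nonpos_nonneg[OF pw less_imp_le[OF h.ppos]])
    qed
    have nn1: "h.ip dd dd \<ge> 0" by (rule h.ip_self_nonneg)
    have nn2: "h.ip dd d \<ge> 0" unfolding d_def by (rule h.E_nonneg)
    have nn3: "lam * h.ip dd bb \<le> 0" using lam0 sgn by (simp add: mult_nonneg_nonpos)
    have nn4: "(1 - lam) * h.ip dd dd \<ge> 0" using lam1 nn1 by simp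
    have norm: "(normV w r (\<lambda>i. u (Suc n) i - u n i))\<^sup>2 = h.ip dd dd"
      unfolding normV_def ip_eq dd_def[symmetric] uu_def[symmetric] vv_def[symmetric]
      using nn1 by simp
    have ineq: "Hfun w r eps t uu - Hfun w r eps t vv \<ge> (1 - lam) * h.ip dd dd"
      using K nn2 nn3 by simp
    have le: "Hfun w r eps t vv \<le> Hfun w r eps t uu" using ineq nn4 by simp
    have iff: "Hfun w r eps t vv = Hfun w r eps t uu \<longleftrightarrow> vv = uu"
    proof
      assume heq: "Hfun w r eps t vv = Hfun w r eps t uu"
      have "h.ip dd d \<le> 0" using K heq nn3 nn4 by simp
      then have "dd = (\<lambda>_. 0)" using h.E_pos[of dd t] unfolding d_def by fastforce
      then show "vv = uu" by (simp add: dd_def fun_eq_iff)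
    qed simp
    show "Hfun w r eps t (u (Suc n)) \<le> Hfun w r eps t (u n)
              \<and> (Hfun w r eps t (u (Suc n)) = Hfun w r eps t (u n) \<longleftrightarrow> u (Suc n) = u n)
              \<and> Hfun w r eps t (u n) - Hfun w r eps t (u (Suc n))
                  \<ge> (1 - t / eps) * (normV w r (\<lambda>i. u (Suc n) i - u n i))\<^sup>2"
      using le iff ineq norm unfolding uu_def vv_def lam_def by simp
  qed
  show ?thesis using part1 part2 by blast
qed

end
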